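(* Let $\boldsymbol{\pi}$ be any joint policy (written in conditional form as below). Then $$ J(\boldsymbol{\pi}_* ) - J(\boldsymbol{\pi}) = \frac{1}{1-\gamma} \sum_{m=1}^N \mathbb{E}_{s \sim \nu_*,\ \mathbf{a}^{1:m-1} \sim \boldsymbol{\pi}_*^{1:m-1}(\cdot|s)}\Big\langle Q_{\boldsymbol{\pi}}^{1:m}(s, \mathbf{a}^{1:m-1}, \cdot),\ \pi_*^m(\cdot|s,\mathbf{a}^{1:m-1}) - \pi^m(\cdot|s, \mathbf{a}^{1:m-1}) \Big\rangle, $$ where the inner product is over $a^m \in \mathcal{A}$.
   Context: A fully cooperative Markov game is a tuple $(\mathcal{N},\mathcal{S},\mathcal{A}^N,\mathcal{P},r,\gamma)$ with agents $\mathcal{N}=\{1,\dots,N\}$, finite state space $\mathcal{S}$, finite individual action space $\mathcal{A}$ (joint action space $\mathcal{A}^N$), transition kernel $\mathcal{P}(\cdot|s,\mathbf{a})$, common reward $r:\mathcal{S}\times\mathcal{A}^N\to[0,1]$ and discount $\gamma\in[0,1)$. For a set of agents $P$, $\mathbf{a}^P$ is their joint action; $\mathbf{a}^{1:m}=(a^1,\dots,a^m)$. Joint policies are written in sequential conditional form $\boldsymbol{\pi}(\mathbf{a}|s)=\prod_{m=1}^N \pi^m(a^m|s,\mathbf{a}^{1:m-1})$, and $\boldsymbol{\pi}^{1:m}(\cdot|s)$ denotes the induced distribution of $\mathbf{a}^{1:m}$. $V_{\boldsymbol{\pi}}(s)$ and $Q_{\boldsymbol{\pi}}(s,\mathbf{a})$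 are the usual discounted value and action-value functions. The multi-agent action value function of agents $1:m$ is $Q^{1:m}_{\boldsymbol{\pi}}(s,\mathbf{a}^{1:m})=\mathbb{E}_{\tilde{\mathbf{a}}}\,Q_{\boldsymbol{\pi}}(s,\mathbf{a}^{1:m},\tilde{\mathbf{a}})$, where $\tilde{\mathbf{a}}=\mathbf{a}^{m+1:N}$ is drawn from $\boldsymbol{\pi}$ (the remaining agents follow $\boldsymbol{\pi}$). $\boldsymbol{\pi}_*$ denotes an optimal joint policy and $\nu_*$ its stationary state distribution; the objective is $J(\boldsymbol{\pi})=\mathbb{E}_{s\sim\nu_*}V_{\boldsymbol{\pi}}(s)$. *)

theory Defs
  imports Complex_Main
begin

text \<open>
Agents are indexed 0..N-1 (agent i here is agent i+1 of the paper).
A joint action is a list of length N; a prefix a^{1:m} is a list of length m.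
A joint policy in sequential conditional form is pol :: nat => 's => 'a list => 'a => real,
where pol i s xs a = pol^{i+1}(a | s, xs) for prefixes xs of length i.
\<close>

definition lists_len :: "nat \<Rightarrow> 'a list set" where
  "lists_len k = {xs. length xs = k}"

definition pol_prefix :: "nat \<Rightarrow> (nat \<Rightarrow> 's \<Rightarrow> 'a list \<Rightarrow> 'a \<Rightarrow> real) \<Rightarrow> 's \<Rightarrow> 'a list \<Rightarrow> real" where
  "pol_prefix m pol s xs = (\<Prod>i<m. pol i s (take i xs) (xs ! i))"

definition pol_suffix :: "nat \<Rightarrow> nat \<Rightarrow> (nat \<Rightarrow> 's \<Rightarrow> 'a list \<Rightarrow> 'a \<Rightarrow> real) \<Rightarrow> 's \<Rightarrow> 'a list \<Rightarrow> real" where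
  "pol_suffix N m pol s as = (\<Prod>i\<in>{m..<N}. pol i s (take i as) (as ! i))"

definition is_markov_game :: "nat \<Rightarrow> ('s::finite \<Rightarrow> 'a list \<Rightarrow> 's \<Rightarrow> real) \<Rightarrow> ('s \<Rightarrow> 'a list \<Rightarrow> real) \<Rightarrow> real \<Rightarrow> bool" where
  "is_markov_game N P r \<gamma> \<longleftrightarrow> 0 \<le> \<gamma> \<and> \<gamma> < 1 \<and>
     (\<forall>s as. length as = N \<longrightarrow>
        (\<forall>s'. 0 \<le> P s as s') \<and> (\<Sum>s'\<in>UNIV. P s as s') = 1 \<and> 0 \<le> r s as \<and> r s as \<le> 1)"

definition is_policy :: "nat \<Rightarrow> (nat \<Rightarrow> 's \<Rightarrow> 'a::finite list \<Rightarrow> 'a \<Rightarrow> real) \<Rightarrow> bool" where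
  "is_policy N pol \<longleftrightarrow> (\<forall>i<N. \<forall>s xs. length xs = i \<longrightarrow>
       (\<forall>a. 0 \<le> pol i s xs a) \<and> (\<Sum>a\<in>UNIV. pol i s xs a) = 1)"

primrec exp_reward :: "nat \<Rightarrow> ('s::finite \<Rightarrow> 'a list \<Rightarrow> 's \<Rightarrow> real) \<Rightarrow> ('s \<Rightarrow> 'a list \<Rightarrow> real)
    \<Rightarrow> (nat \<Rightarrow> 's \<Rightarrow> 'a list \<Rightarrow> 'a \<Rightarrow> real) \<Rightarrow> nat \<Rightarrow> 's \<Rightarrow> real" where
  "exp_reward N P r pol 0 s = (\<Sum>as\<in>lists_len N. pol_prefix N pol s as * r s as)"
| "exp_reward N P r pol (Suc t) s =
     (\<Sum>as\<in>lists_len N. pol_prefix N pol s as * (\<Sum>s'\<in>UNIV. P s as s' * exp_reward N P r pol t s'))"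

definition Vf :: "nat \<Rightarrow> ('s::finite \<Rightarrow> 'a list \<Rightarrow> 's \<Rightarrow> real) \<Rightarrow> ('s \<Rightarrow> 'a list \<Rightarrow> real) \<Rightarrow> real
    \<Rightarrow> (nat \<Rightarrow> 's \<Rightarrow> 'a list \<Rightarrow> 'a \<Rightarrow> real) \<Rightarrow> 's \<Rightarrow> real" where
  "Vf N P r \<gamma> pol s = (\<Sum>t. \<gamma> ^ t * exp_reward N P r pol t s)"

definition Qf :: "nat \<Rightarrow> ('s::finite \<Rightarrow> 'a list \<Rightarrow> 's \<Rightarrow> real) \<Rightarrow> ('s \<Rightarrow> 'a list \<Rightarrow> real) \<Rightarrow> real
    \<Rightarrow> (nat \<Rightarrow> 's \<Rightarrow> 'a list \<Rightarrow> 'a \<Rightarrow> real) \<Rightarrow> 's \<Rightarrow> 'a list \<Rightarrow> real" where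
  "Qf N P r \<gamma> pol s as = r s as + \<gamma> * (\<Sum>s'\<in>UNIV. P s as s' * Vf N P r \<gamma> pol s')"

text \<open>Multi-agent action value Q^{1:m}_pi(s, xs) for a prefix xs of length m:
  the remaining agents m..N-1 follow pol.\<close>
definition Qm :: "nat \<Rightarrow> ('s::finite \<Rightarrow> 'a list \<Rightarrow> 's \<Rightarrow> real) \<Rightarrow> ('s \<Rightarrow> 'a list \<Rightarrow> real) \<Rightarrow> real
    \<Rightarrow> (nat \<Rightarrow> 's \<Rightarrow> 'a list \<Rightarrow> 'a \<Rightarrow> real) \<Rightarrow> 's \<Rightarrow> 'a list \<Rightarrow> real" where
  "Qm N P r \<gamma> pol s xs =
     (\<Sum>ys\<in>lists_len (N - length xs).
        pol_suffix N (length xs) pol s (xs @ ys) * Qf N P r \<gamma> pol s (xs @ ys))"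

definition is_optimal :: "nat \<Rightarrow> ('s::finite \<Rightarrow> 'a::finite list \<Rightarrow> 's \<Rightarrow> real) \<Rightarrow> ('s \<Rightarrow> 'a list \<Rightarrow> real) \<Rightarrow> real
    \<Rightarrow> (nat \<Rightarrow> 's \<Rightarrow> 'a list \<Rightarrow> 'a \<Rightarrow> real) \<Rightarrow> bool" where
  "is_optimal N P r \<gamma> pol \<longleftrightarrow> is_policy N pol \<and>
     (\<forall>pol'. is_policy N pol' \<longrightarrow> (\<forall>s. Vf N P r \<gamma> pol' s \<le> Vf N P r \<gamma> pol s))"

definition is_stationary :: "nat \<Rightarrow> ('s::finite \<Rightarrow> 'a list \<Rightarrow> 's \<Rightarrow> real)
    \<Rightarrow> (nat \<Rightarrow> 's \<Rightarrow> 'a list \<Rightarrow> 'a \<Rightarrow> real) \<Rightarrow> ('s \<Rightarrow> real) \<Rightarrow> bool" where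
  "is_stationary N P pol \<nu> \<longleftrightarrow> (\<forall>s. 0 \<le> \<nu> s) \<and> (\<Sum>s\<in>UNIV. \<nu> s) = 1 \<and>
     (\<forall>s'. (\<Sum>s\<in>UNIV. \<nu> s * (\<Sum>as\<in>lists_len N. pol_prefix N pol s as * P s as s')) = \<nu> s')"

definition Jf :: "('s::finite \<Rightarrow> real) \<Rightarrow> ('s \<Rightarrow> real) \<Rightarrow> real" where
  "Jf \<nu> V = (\<Sum>s\<in>UNIV. \<nu> s * V s)"

end

theory Submission
  imports Defs
begin

lemma finite_lists_len: "finite (lists_len k :: 'a::finite list set)"
proof -
  have "lists_len k = {xs::'a list. set xs \<subseteq> UNIV \<and> length xs = k}"
    by (auto simp: lists_len_def)
  then show ?thesis using finite_lists_length_eq[of "UNIV::'a set" k] by simp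
qed

lemma lists_len_Suc_snoc: "lists_len (Suc m) = (\<lambda>(xs,a). xs @ [a]) ` (lists_len m \<times> UNIV)"
proof (rule set_eqI, rule iffI)
  fix ys :: "'a list" assume "ys \<in> lists_len (Suc m)"
  then have "length ys = Suc m" by (simp add: lists_len_def)
  then obtain xs a where "ys = xs @ [a]" "length xs = m"
    by (metis length_Suc_conv_rev)
  then show "ys \<in> (\<lambda>(xs,a). xs @ [a]) ` (lists_len m \<times> UNIV)"
    by (auto simp: lists_len_def)
qed (auto simp: lists_len_def)

lemma lists_len_Suc_cons: "lists_len (Suc m) = (\<lambda>(a,xs). a # xs) ` (UNIV \<times> lists_len m)"
proof (rule set_eqI, rule iffI)
  fix ys :: "'a list" assume "ys \<in> lists_len (Suc m)"
  then have "length ys = Suc m" by (simp add: lists_len_def)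
  then obtain xs a where "ys = a # xs" "length xs = m"
    by (metis length_Suc_conv)
  then show "ys \<in> (\<lambda>(a,xs). a # xs) ` (UNIV \<times> lists_len m)"
    by (auto simp: lists_len_def)
qed (auto simp: lists_len_def)

lemma sum_lists_len_snoc:
  "sum f (lists_len (Suc m) :: 'a::finite list set) = (\<Sum>xs\<in>lists_len m. \<Sum>a\<in>UNIV. f (xs @ [a]))"
proof -
  have inj: "inj_on (\<lambda>(xs,a). xs @ [a]) (lists_len m \<times> (UNIV::'a set))"
    by (auto simp: inj_on_def)
  have "sum f (lists_len (Suc m)) = sum (f \<circ> (\<lambda>(xs,a). xs @ [a])) (lists_len m \<times> UNIV)"
    unfolding lists_len_Suc_snoc by (rule sum.reindex[OF inj])
  also have "\<dots> = (\<Sum>(xs,a)\<in>lists_len m \<times> UNIV. f (xs @ [a]))"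
    by (rule sum.cong) auto
  also have "\<dots> = (\<Sum>xs\<in>lists_len m. \<Sum>a\<in>UNIV. f (xs @ [a]))"
    by (rule sum.cartesian_product[symmetric])
  finally show ?thesis .
qed

lemma sum_lists_len_cons:
  "sum f (lists_len (Suc m) :: 'a::finite list set) = (\<Sum>a\<in>UNIV. \<Sum>xs\<in>lists_len m. f (a # xs))"
proof -
  have inj: "inj_on (\<lambda>(a,xs). a # xs) ((UNIV::'a set) \<times> lists_len m)"
    by (auto simp: inj_on_def)
  have "sum f (lists_len (Suc m)) = sum (f \<circ> (\<lambda>(a,xs). a # xs)) (UNIV \<times> lists_len m)"
    unfolding lists_len_Suc_cons by (rule sum.reindex[OF inj])
  also have "\<dots> = (\<Sum>(a,xs)\<in>UNIV \<times> lists_len m. f (a # xs))"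
    by (rule sum.cong) auto
  also have "\<dots> = (\<Sum>a\<in>UNIV. \<Sum>xs\<in>lists_len m. f (a # xs))"
    by (rule sum.cartesian_product[symmetric])
  finally show ?thesis .
qed

lemma pol_prefix_snoc:
  assumes "length xs = m"
  shows "pol_prefix (Suc m) pol s (xs @ [a]) = pol_prefix m pol s xs * pol m s xs a"
proof -
  have "(\<Prod>i<m. pol i s (take i (xs @ [a])) ((xs @ [a]) ! i)) = (\<Prod>i<m. pol i s (take i xs) (xs ! i))"
    by (rule prod.cong) (use assms in \<open>auto simp: nth_append\<close>)
  then show ?thesis using assms unfolding pol_prefix_def by (simp add: nth_append)
qed

lemma pol_prefix_sum:
  fixes pol :: "nat \<Rightarrow> 's \<Rightarrow> 'a::finite list \<Rightarrow> 'a \<Rightarrow> real"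
  assumes "is_policy N pol" "m \<le> N"
  shows "(\<Sum>xs\<in>lists_len m. pol_prefix m pol s xs) = 1"
  using assms(2)
proof (induction m)
  case 0
  have l0: "lists_len 0 = {[]}" by (auto simp: lists_len_def)
  show ?case by (simp add: l0 pol_prefix_def)
next
  case (Suc m)
  have "(\<Sum>xs\<in>lists_len (Suc m). pol_prefix (Suc m) pol s xs)
      = (\<Sum>xs\<in>lists_len m. \<Sum>a\<in>UNIV. pol_prefix m pol s xs * pol m s xs a)"
    unfolding sum_lists_len_snoc by (intro sum.cong refl) (simp add: pol_prefix_snoc lists_len_def)
  also have "\<dots> = (\<Sum>xs\<in>lists_len m. pol_prefix m pol s xs)"
  proof (rule sum.cong)
    fix xs :: "'a list" assume "xs \<in> lists_len m"
    then have "(\<Sum>a\<in>UNIV. pol m s xs a) = 1" using assms(1) Suc.prems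
      by (auto simp: is_policy_def lists_len_def)
    then show "(\<Sum>a\<in>UNIV. pol_prefix m pol s xs * pol m s xs a) = pol_prefix m pol s xs"
      by (simp add: sum_distrib_left[symmetric])
  qed simp
  also have "\<dots> = 1" using Suc by simp
  finally show ?case .
qed

lemma pol_prefix_nonneg:
  assumes "is_policy N pol" "m \<le> N" "m \<le> length xs"
  shows "0 \<le> pol_prefix m pol s xs"
  unfolding pol_prefix_def
  by (rule prod_nonneg) (use assms in \<open>auto simp: is_policy_def\<close>)


lemma exp_reward_bounds:
  fixes P :: "'s::finite \<Rightarrow> 'a::finite list \<Rightarrow> 's \<Rightarrow> real"
  assumes mg: "is_markov_game N P r \<gamma>" and pp: "is_policy N pol"
  shows "0 \<le> exp_reward N P r pol t s \<and> exp_reward N P r pol t s \<le> 1"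
proof (induction t arbitrary: s)
  case 0
  have pn: "0 \<le> pol_prefix N pol s as" if "as \<in> lists_len N" for as
    using pol_prefix_nonneg[OF pp, of N as] that by (simp add: lists_len_def)
  have ps: "(\<Sum>as\<in>lists_len N. pol_prefix N pol s as) = 1" using pol_prefix_sum[OF pp] by simp
  have "(\<Sum>as\<in>lists_len N. pol_prefix N pol s as * r s as) \<le> (\<Sum>as\<in>lists_len N. pol_prefix N pol s as * 1)"
    by (rule sum_mono, rule mult_left_mono) (use mg pn in \<open>auto simp: is_markov_game_def lists_len_def\<close>)
  moreover have "0 \<le> (\<Sum>as\<in>lists_len N. pol_prefix N pol s as * r s as)"
    by (rule sum_nonneg, rule mult_nonneg_nonneg) (use mg pn in \<open>auto simp: is_markov_game_def lists_len_def\<close>)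
  ultimately show ?case using ps by simp
next
  case (Suc t)
  have pn: "0 \<le> pol_prefix N pol s as" if "as \<in> lists_len N" for as
    using pol_prefix_nonneg[OF pp, of N as] that by (simp add: lists_len_def)
  have ps: "(\<Sum>as\<in>lists_len N. pol_prefix N pol s as) = 1" using pol_prefix_sum[OF pp] by simp
  have inner: "0 \<le> (\<Sum>s'\<in>UNIV. P s as s' * exp_reward N P r pol t s') \<and>
       (\<Sum>s'\<in>UNIV. P s as s' * exp_reward N P r pol t s') \<le> 1" if "as \<in> lists_len N" for as
  proof -
    have Pn: "\<forall>s'. 0 \<le> P s as s'" and Ps: "(\<Sum>s'\<in>UNIV. P s as s') = 1"
      using mg that by (auto simp: is_markov_game_def lists_len_def)
    have "(\<Sum>s'\<in>UNIV. P s as s' * exp_reward N P r pol t s') \<le> (\<Sum>s'\<in>UNIV. P s as s' * 1)"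
      by (rule sum_mono, rule mult_left_mono) (use Pn Suc.IH in auto)
    moreover have "0 \<le> (\<Sum>s'\<in>UNIV. P s as s' * exp_reward N P r pol t s')"
      by (rule sum_nonneg, rule mult_nonneg_nonneg) (use Pn Suc.IH in auto)
    ultimately show ?thesis using Ps by simp
  qed
  have "(\<Sum>as\<in>lists_len N. pol_prefix N pol s as * (\<Sum>s'\<in>UNIV. P s as s' * exp_reward N P r pol t s'))
     \<le> (\<Sum>as\<in>lists_len N. pol_prefix N pol s as * 1)"
    by (rule sum_mono, rule mult_left_mono) (use inner pn in auto)
  moreover have "0 \<le> (\<Sum>as\<in>lists_len N. pol_prefix N pol s as * (\<Sum>s'\<in>UNIV. P s as s' * exp_reward N P r pol t s'))"
    by (rule sum_nonneg, rule mult_nonneg_nonneg) (use inner pn in auto)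
  ultimately show ?case using ps by simp
qed

lemma Vf_sums:
  fixes P :: "'s::finite \<Rightarrow> 'a::finite list \<Rightarrow> 's \<Rightarrow> real"
  assumes mg: "is_markov_game N P r \<gamma>" and pp: "is_policy N pol"
  shows "(\<lambda>t. \<gamma> ^ t * exp_reward N P r pol t s) sums Vf N P r \<gamma> pol s"
proof -
  have g: "0 \<le> \<gamma>" "\<gamma> < 1" using mg by (auto simp: is_markov_game_def)
  have "summable (\<lambda>t. \<gamma> ^ t * exp_reward N P r pol t s)"
  proof (rule summable_comparison_test')
    show "summable (\<lambda>t. \<gamma> ^ t)" using g by (simp add: summable_geometric)
    fix t
    have b: "0 \<le> exp_reward N P r pol t s" "exp_reward N P r pol t s \<le> 1"
      using exp_reward_bounds[OF mg pp] by auto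
    have "\<gamma> ^ t * exp_reward N P r pol t s \<le> \<gamma> ^ t * 1"
      by (rule mult_left_mono) (use b g in auto)
    then show "norm (\<gamma> ^ t * exp_reward N P r pol t s) \<le> \<gamma> ^ t" using b g by simp
  qed
  then show ?thesis unfolding Vf_def by (rule summable_sums)
qed

lemma bellman:
  fixes P :: "'s::finite \<Rightarrow> 'a::finite list \<Rightarrow> 's \<Rightarrow> real"
  assumes mg: "is_markov_game N P r \<gamma>" and pp: "is_policy N pol"
  shows "Vf N P r \<gamma> pol s = (\<Sum>as\<in>lists_len N. pol_prefix N pol s as * Qf N P r \<gamma> pol s as)"
proof -
  let ?e = "exp_reward N P r pol"
  let ?V = "Vf N P r \<gamma> pol"
  have "(\<lambda>t. \<Sum>as\<in>lists_len N. \<Sum>s'\<in>UNIV. \<gamma> * pol_prefix N pol s as * P s as s' * (\<gamma> ^ t * ?e t s'))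
      sums (\<Sum>as\<in>lists_len N. \<Sum>s'\<in>UNIV. \<gamma> * pol_prefix N pol s as * P s as s' * ?V s')"
    by (intro sums_sum sums_mult Vf_sums[OF mg pp])
  moreover have "(\<lambda>t. \<Sum>as\<in>lists_len N. \<Sum>s'\<in>UNIV. \<gamma> * pol_prefix N pol s as * P s as s' * (\<gamma> ^ t * ?e t s'))
     = (\<lambda>t. \<gamma> ^ Suc t * ?e (Suc t) s)"
    by (simp add: sum_distrib_left mult_ac)
  ultimately have suc: "(\<lambda>t. \<gamma> ^ Suc t * ?e (Suc t) s) sums
      (\<Sum>as\<in>lists_len N. \<Sum>s'\<in>UNIV. \<gamma> * pol_prefix N pol s as * P s as s' * ?V s')" by simp
  then have "(\<lambda>t. \<gamma> ^ t * ?e t s) sums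
      ((\<Sum>as\<in>lists_len N. \<Sum>s'\<in>UNIV. \<gamma> * pol_prefix N pol s as * P s as s' * ?V s') + ?e 0 s)"
    using iffD1[OF sums_Suc_iff[of "\<lambda>t. \<gamma> ^ t * ?e t s"] suc] by simp
  then have "?V s = (\<Sum>as\<in>lists_len N. \<Sum>s'\<in>UNIV. \<gamma> * pol_prefix N pol s as * P s as s' * ?V s') + ?e 0 s"
    using Vf_sums[OF mg pp] sums_unique2 by blast
  also have "\<dots> = (\<Sum>as\<in>lists_len N. pol_prefix N pol s as * Qf N P r \<gamma> pol s as)"
    by (simp add: Qf_def distrib_left sum.distrib sum_distrib_left mult_ac)
  finally show ?thesis .
qed

lemma pol_suffix_step:
  assumes "m < N"
  shows "pol_suffix N m pol s ys = pol m s (take m ys) (ys ! m) * pol_suffix N (Suc m) pol s ys"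
  unfolding pol_suffix_def using assms by (simp add: prod.atLeast_Suc_lessThan)

lemma Qm_step:
  fixes P :: "'s::finite \<Rightarrow> 'a::finite list \<Rightarrow> 's \<Rightarrow> real"
  assumes "length xs = m" "m < N"
  shows "Qm N P r \<gamma> pol s xs = (\<Sum>a\<in>UNIV. pol m s xs a * Qm N P r \<gamma> pol s (xs @ [a]))"
proof -
  have NS: "N - m = Suc (N - Suc m)" using assms by simp
  have "Qm N P r \<gamma> pol s xs = (\<Sum>a\<in>UNIV. \<Sum>zs\<in>lists_len (N - Suc m).
          pol_suffix N m pol s (xs @ a # zs) * Qf N P r \<gamma> pol s (xs @ a # zs))"
    unfolding Qm_def assms(1) NS sum_lists_len_cons ..
  also have "\<dots> = (\<Sum>a\<in>UNIV. \<Sum>zs\<in>lists_len (N - Suc m).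
          pol m s xs a * (pol_suffix N (Suc m) pol s ((xs @ [a]) @ zs) * Qf N P r \<gamma> pol s ((xs @ [a]) @ zs)))"
    using assms by (intro sum.cong refl) (simp add: pol_suffix_step nth_append)
  also have "\<dots> = (\<Sum>a\<in>UNIV. pol m s xs a * Qm N P r \<gamma> pol s (xs @ [a]))"
    unfolding Qm_def using assms by (simp add: sum_distrib_left)
  finally show ?thesis .
qed

lemma Qm_full:
  assumes "length xs = N"
  shows "Qm N P r \<gamma> pol s xs = Qf N P r \<gamma> pol s xs"
proof -
  have l0: "lists_len 0 = {[]}" by (auto simp: lists_len_def)
  show ?thesis unfolding Qm_def using assms by (simp add: l0 pol_suffix_def)
qed

lemma Qm_nil:
  "Qm N P r \<gamma> pol s [] = (\<Sum>as\<in>lists_len N. pol_prefix N pol s as * Qf N P r \<gamma> pol s as)"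
  unfolding Qm_def pol_suffix_def pol_prefix_def by (simp add: atLeast0LessThan)

theorem lemma1:
  fixes N :: nat
    and P :: "'s::finite \<Rightarrow> 'a::finite list \<Rightarrow> 's \<Rightarrow> real"
    and r :: "'s \<Rightarrow> 'a list \<Rightarrow> real"
    and \<gamma> :: real
    and pol_star pol :: "nat \<Rightarrow> 's \<Rightarrow> 'a list \<Rightarrow> 'a \<Rightarrow> real"
    and \<nu> :: "'s \<Rightarrow> real"
  assumes "is_markov_game N P r \<gamma>"
    and "is_optimal N P r \<gamma> pol_star"
    and "is_stationary N P pol_star \<nu>"
    and "is_policy N pol"
  shows "Jf \<nu> (Vf N P r \<gamma> pol_star) - Jf \<nu> (Vf N P r \<gamma> pol) =
    1 / (1 - \<gamma>) * (\<Sum>m<N. \<Sum>s\<in>UNIV. \<nu> s *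
       (\<Sum>xs\<in>lists_len m. pol_prefix m pol_star s xs *
          (\<Sum>a\<in>UNIV. Qm N P r \<gamma> pol s (xs @ [a]) * (pol_star m s xs a - pol m s xs a))))"
proof -
  note mg = assms(1)
  have ps: "is_policy N pol_star" using assms(2) by (simp add: is_optimal_def)
  note pp = assms(4)
  have g: "0 \<le> \<gamma>" "\<gamma> < 1" using mg by (auto simp: is_markov_game_def)
  have nu_stat: "(\<Sum>s\<in>UNIV. \<nu> s * (\<Sum>as\<in>lists_len N. pol_prefix N pol_star s as * P s as s')) = \<nu> s'" for s'
    using assms(3) by (simp add: is_stationary_def)
  define V where "V = Vf N P r \<gamma> pol"
  define Vs where "Vs = Vf N P r \<gamma> pol_star"
  define T where "T m s = (\<Sum>xs\<in>lists_len m. pol_prefix m pol_star s xs * Qm N P r \<gamma> pol s xs)" for m s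
  define A where "A s = T N s - T 0 s" for s
  define D where "D s = Vs s - V s" for s
  have tstep: "(\<Sum>xs\<in>lists_len m. pol_prefix m pol_star s xs *
          (\<Sum>a\<in>UNIV. Qm N P r \<gamma> pol s (xs @ [a]) * (pol_star m s xs a - pol m s xs a)))
        = T (Suc m) s - T m s" if "m < N" for m s
  proof -
    have "T (Suc m) s = (\<Sum>xs\<in>lists_len m. \<Sum>a\<in>UNIV.
            pol_prefix m pol_star s xs * pol_star m s xs a * Qm N P r \<gamma> pol s (xs @ [a]))"
      unfolding T_def sum_lists_len_snoc
      by (intro sum.cong refl) (simp add: pol_prefix_snoc lists_len_def)
    moreover have "T m s = (\<Sum>xs\<in>lists_len m. pol_prefix m pol_star s xs *
            (\<Sum>a\<in>UNIV. pol m s xs a * Qm N P r \<gamma> pol s (xs @ [a])))"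
      unfolding T_def using that
      by (intro sum.cong refl) (simp add: Qm_step[symmetric] lists_len_def)
    ultimately show ?thesis
      by (simp add: sum_subtractf[symmetric] sum_distrib_left right_diff_distrib left_diff_distrib mult_ac)
  qed
  have TN: "T N s = (\<Sum>as\<in>lists_len N. pol_prefix N pol_star s as * Qf N P r \<gamma> pol s as)" for s
    unfolding T_def by (intro sum.cong refl) (simp add: Qm_full lists_len_def)
  have T0: "T 0 s = V s" for s
  proof -
    have l0: "lists_len 0 = {[]}" by (auto simp: lists_len_def)
    show ?thesis unfolding T_def V_def
      by (simp add: l0 pol_prefix_def Qm_nil bellman[OF mg pp])
  qed
  have rhs: "(\<Sum>m<N. \<Sum>s\<in>UNIV. \<nu> s *
       (\<Sum>xs\<in>lists_len m. pol_prefix m pol_star s xs *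
          (\<Sum>a\<in>UNIV. Qm N P r \<gamma> pol s (xs @ [a]) * (pol_star m s xs a - pol m s xs a))))
      = (\<Sum>s\<in>UNIV. \<nu> s * A s)"
  proof -
    have "(\<Sum>m<N. \<Sum>s\<in>UNIV. \<nu> s *
       (\<Sum>xs\<in>lists_len m. pol_prefix m pol_star s xs *
          (\<Sum>a\<in>UNIV. Qm N P r \<gamma> pol s (xs @ [a]) * (pol_star m s xs a - pol m s xs a))))
       = (\<Sum>m<N. \<Sum>s\<in>UNIV. \<nu> s * (T (Suc m) s - T m s))"
      by (intro sum.cong refl) (simp add: tstep)
    also have "\<dots> = (\<Sum>s\<in>UNIV. \<Sum>m<N. \<nu> s * (T (Suc m) s - T m s))"
      by (rule sum.swap)
    also have "\<dots> = (\<Sum>s\<in>UNIV. \<nu> s * (\<Sum>m<N. T (Suc m) s - T m s))"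
      by (simp add: sum_distrib_left)
    also have "\<dots> = (\<Sum>s\<in>UNIV. \<nu> s * A s)"
    proof -
      have tel: "(\<Sum>m<N. T (Suc m) s - T m s) = T N s - T 0 s" for s
        by (rule sum_lessThan_telescope)
      show ?thesis unfolding A_def tel ..
    qed
    finally show ?thesis .
  qed
  have Dstep: "D s = A s + \<gamma> * (\<Sum>as\<in>lists_len N. pol_prefix N pol_star s as * (\<Sum>s'\<in>UNIV. P s as s' * D s'))" for s
  proof -
    have "Vs s = (\<Sum>as\<in>lists_len N. pol_prefix N pol_star s as * (r s as + \<gamma> * (\<Sum>s'\<in>UNIV. P s as s' * Vs s')))"
      unfolding Vs_def by (simp only: bellman[OF mg ps, of s]) (simp only: Qf_def)
    moreover have "A s + V s = (\<Sum>as\<in>lists_len N. pol_prefix N pol_star s as * (r s as + \<gamma> * (\<Sum>s'\<in>UNIV. P s as s' * V s')))"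
      unfolding A_def TN T0 by (simp add: Qf_def V_def)
    ultimately have "D s - A s = (\<Sum>as\<in>lists_len N. pol_prefix N pol_star s as * (r s as + \<gamma> * (\<Sum>s'\<in>UNIV. P s as s' * Vs s')))
        - (\<Sum>as\<in>lists_len N. pol_prefix N pol_star s as * (r s as + \<gamma> * (\<Sum>s'\<in>UNIV. P s as s' * V s')))"
      unfolding D_def by linarith
    also have "\<dots> = \<gamma> * (\<Sum>as\<in>lists_len N. pol_prefix N pol_star s as * (\<Sum>s'\<in>UNIV. P s as s' * D s'))"
      unfolding D_def
      by (simp add: sum_subtractf[symmetric] sum_distrib_left right_diff_distrib distrib_left mult_ac)
    finally show ?thesis by linarith
  qed
  have swap: "(\<Sum>s\<in>UNIV. \<nu> s * (\<Sum>as\<in>lists_len N. pol_prefix N pol_star s as * (\<Sum>s'\<in>UNIV. P s as s' * D s')))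
      = (\<Sum>s'\<in>UNIV. (\<Sum>s\<in>UNIV. \<nu> s * (\<Sum>as\<in>lists_len N. pol_prefix N pol_star s as * P s as s')) * D s')"
  proof -
    have "(\<Sum>s\<in>UNIV. \<nu> s * (\<Sum>as\<in>lists_len N. pol_prefix N pol_star s as * (\<Sum>s'\<in>UNIV. P s as s' * D s')))
        = (\<Sum>s\<in>UNIV. \<Sum>as\<in>lists_len N. \<Sum>s'\<in>UNIV. \<nu> s * pol_prefix N pol_star s as * P s as s' * D s')"
      by (simp add: sum_distrib_left mult_ac)
    also have "\<dots> = (\<Sum>s\<in>UNIV. \<Sum>s'\<in>UNIV. \<Sum>as\<in>lists_len N. \<nu> s * pol_prefix N pol_star s as * P s as s' * D s')"
      by (intro sum.cong refl) (rule sum.swap)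
    also have "\<dots> = (\<Sum>s'\<in>UNIV. \<Sum>s\<in>UNIV. \<Sum>as\<in>lists_len N. \<nu> s * pol_prefix N pol_star s as * P s as s' * D s')"
      by (rule sum.swap)
    also have "\<dots> = (\<Sum>s'\<in>UNIV. (\<Sum>s\<in>UNIV. \<nu> s * (\<Sum>as\<in>lists_len N. pol_prefix N pol_star s as * P s as s')) * D s')"
      by (simp add: sum_distrib_left sum_distrib_right mult_ac)
    finally show ?thesis .
  qed
  have J: "Jf \<nu> Vs - Jf \<nu> V = (\<Sum>s\<in>UNIV. \<nu> s * D s)"
    unfolding Jf_def D_def by (simp add: sum_subtractf[symmetric] right_diff_distrib)
  have "(\<Sum>s\<in>UNIV. \<nu> s * D s) = (\<Sum>s\<in>UNIV. \<nu> s * A s)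
      + \<gamma> * (\<Sum>s\<in>UNIV. \<nu> s * (\<Sum>as\<in>lists_len N. pol_prefix N pol_star s as * (\<Sum>s'\<in>UNIV. P s as s' * D s')))"
    by (subst Dstep) (simp add: distrib_left sum.distrib sum_distrib_left mult_ac)
  also have "\<dots> = (\<Sum>s\<in>UNIV. \<nu> s * A s) + \<gamma> * (\<Sum>s\<in>UNIV. \<nu> s * D s)"
    unfolding swap nu_stat ..
  finally have "(1 - \<gamma>) * (\<Sum>s\<in>UNIV. \<nu> s * D s) = (\<Sum>s\<in>UNIV. \<nu> s * A s)"
    by (simp add: algebra_simps)
  then have "(\<Sum>s\<in>UNIV. \<nu> s * D s) = 1 / (1 - \<gamma>) * (\<Sum>s\<in>UNIV. \<nu> s * A s)"
    using g by (simp add: field_simps)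
  then show ?thesis using J rhs unfolding Vs_def V_def by simp
qed

end
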